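(* Let $s(\cdot)\in\mathcal{P}(\mathbb{R})$ with $s(x)=s_0>2$ for all $x\in[0,1]$. Then the kernel $K(x,y)=K_1(x-y)K_2(y)$ does not belong to $H_{s(\cdot),1}$.
   Context: Here $n=1$. Fix $\beta>0$; $K_1(t)=\chi_{[2,3]}(t)$ and $K_2(t)=t^{-1/2}\big[\log(e/t)\big]^{-\frac{1+\beta}{2}}\chi_{(0,1)}(t)$. Cubes are intervals $Q$; $mQ$ is the concentric interval of length $m\ell(Q)$. $\mathcal{P}(\mathbb{R})$: measurable $p(\cdot):\mathbb{R}\to[1,\infty]$; $\|f\|_{p(\cdot)}=\inf\{\lambda>0:\int_{\{p<\infty\}}|f/\lambda|^{p(x)}dx+\|(f/\lambda)\chi_{\{p=\infty\}}\|_\infty\le1\}$. $K\in H_{s(\cdot),1}$ means $\sup_Q\sup_{x,z\in\frac12Q}\sum_{m\ge1}2^m\ell(Q)\frac{\|[K(x,\cdot)-K(z,\cdot)]\chi_{2^mQ\setminus2^{m-1}Q}\|_{s(\cdot)}}{\|\chi_{2^mQ}\|_{s(\cdot)}}<\infty$ (in particular all terms must be finite). *)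

theory Defs
  imports "HOL-Probability.Essential_Supremum"
begin

definition var_exp :: "(real \<Rightarrow> ereal) \<Rightarrow> bool" where
  "var_exp p \<longleftrightarrow> p \<in> borel_measurable lebesgue \<and> (\<forall>x. 1 \<le> p x)"

definition modular :: "(real \<Rightarrow> ereal) \<Rightarrow> (real \<Rightarrow> real) \<Rightarrow> ereal" where
  "modular p f =
     enn2ereal (\<integral>\<^sup>+ x. indicator {y. p y < \<infinity>} x * ennreal (\<bar>f x\<bar> powr real_of_ereal (p x)) \<partial>lebesgue)
     + esssup lebesgue (\<lambda>x. ereal (\<bar>f x\<bar> * indicator {y. p y = \<infinity>} x))"

text \<open>Luxemburg norm (value infinity if no admissible lambda exists).\<close>
definition vnorm :: "(real \<Rightarrow> ereal) \<Rightarrow> (real \<Rightarrow> real) \<Rightarrow> ereal" where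
  "vnorm p f = Inf (ereal ` {t::real. 0 < t \<and> modular p (\<lambda>x. f x / t) \<le> 1})"

definition ival :: "real \<Rightarrow> real \<Rightarrow> real set" where
  "ival c r = {c - r/2 .. c + r/2}"

definition H_s1 :: "(real \<Rightarrow> ereal) \<Rightarrow> (real \<Rightarrow> real \<Rightarrow> real) \<Rightarrow> bool" where
  "H_s1 s K \<longleftrightarrow> (\<exists>C::real. \<forall>c l x z. 0 < l \<longrightarrow> x \<in> ival c (l/2) \<longrightarrow> z \<in> ival c (l/2) \<longrightarrow>
     (\<Sum>m. ereal (2 ^ Suc m * l)
           * vnorm s (\<lambda>y. (K x y - K z y) * indicator (ival c (2 ^ Suc m * l) - ival c (2 ^ m * l)) y)
           / vnorm s (indicator (ival c (2 ^ Suc m * l)))) \<le> ereal C)"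

definition K1 :: "real \<Rightarrow> real" where
  "K1 t = indicator {2..3} t"

definition K2 :: "real \<Rightarrow> real \<Rightarrow> real" where
  "K2 \<beta> t = (if 0 < t \<and> t < 1 then t powr (-1/2) * (ln (exp 1 / t)) powr (-(1 + \<beta>)/2) else 0)"

end

theory Submission
  imports Defs
begin


lemma inv_integral_infinite:
  fixes \<delta> c :: real assumes "0 < \<delta>" "0 < c"
  shows "(\<integral>\<^sup>+ y. indicator {0<..<\<delta>} y * ennreal (c / y) \<partial>lebesgue) = \<infinity>"
proof -
  have "ennreal (c * (real n + 1)) \<le> (\<integral>\<^sup>+ y. indicator {0<..<\<delta>} y * ennreal (c / y) \<partial>lebesgue)" for n :: nat
  proof -
    define d where "d = \<delta> / 2"
    define e where "e = d * exp (- real n - 1)"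
    have d0: "0 < d" "d < \<delta>" using assms by (auto simp: d_def)
    have e0: "0 < e" using d0 by (simp add: e_def)
    have "exp (- real n - 1) < 1" by simp
    then have ed: "e < d" using d0 unfolding e_def by simp
    have der: "((\<lambda>y. c * ln y) has_vector_derivative c / y) (at y within {e..d})" if "y \<in> {e..d}" for y
      using that e0 by (auto intro!: derivative_eq_intros simp: has_real_derivative_iff_has_vector_derivative[symmetric])
    have hi: "((\<lambda>y. c / y) has_integral (c * ln d - c * ln e)) {e..d}"
      using fundamental_theorem_of_calculus[OF less_imp_le[OF ed] der] by simp
    have eq: "c * ln d - c * ln e = c * (real n + 1)"
      using d0 by (simp add: e_def ln_mult algebra_simps)
    have "(\<integral>\<^sup>+ y. ennreal (c / y) * indicator {e..d} y \<partial>lborel) = ennreal (c * (real n + 1))"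
      by (rule nn_integral_has_integral_lebesgue'[OF _ hi[unfolded eq]]) (use e0 assms in auto)
    then have "(\<integral>\<^sup>+ y. ennreal (c / y) * indicator {e..d} y \<partial>lebesgue) = ennreal (c * (real n + 1))"
      by (simp only: nn_integral_completion)
    moreover have "(\<integral>\<^sup>+ y. ennreal (c / y) * indicator {e..d} y \<partial>lebesgue) \<le> (\<integral>\<^sup>+ y. indicator {0<..<\<delta>} y * ennreal (c / y) \<partial>lebesgue)"
      using e0 d0 by (intro nn_integral_mono) (auto simp: indicator_def)
    ultimately show ?thesis by simp
  qed
  note B = this
  show ?thesis
  proof (rule ccontr)
    assume "\<not> ?thesis" then have "(\<integral>\<^sup>+ y. indicator {0<..<\<delta>} y * ennreal (c / y) \<partial>lebesgue) \<noteq> \<infinity>" by simp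
    then obtain r where r: "(\<integral>\<^sup>+ y. indicator {0<..<\<delta>} y * ennreal (c / y) \<partial>lebesgue) = ennreal r" "0 \<le> r"
      using ennreal_cases by (metis infinity_ennreal_def)
    obtain n :: nat where n: "r / c < real n" using reals_Archimedean2 by blast
    have "ennreal (c * (real n + 1)) \<le> ennreal r" using B[of n] r by simp
    then have "c * (real n + 1) \<le> r" using r(2) by (simp add: ennreal_le_iff)
    moreover have "r < c * real n" using n assms by (simp add: field_simps)
    ultimately show False using assms by (simp add: algebra_simps)
  qed
qed


lemma ln_le_sqrt: fixes v :: real assumes "0 \<le> v" shows "ln (1 + v) \<le> 2 * sqrt v"
proof -
  have s: "sqrt (1 + v) \<le> 1 + sqrt v"
    by (rule real_le_lsqrt) (use assms in \<open>auto simp: power2_eq_square algebra_simps\<close>)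
  have "ln (1 + v) = 2 * ln (sqrt (1 + v))" using assms by (simp add: ln_sqrt)
  also have "\<dots> \<le> 2 * (sqrt (1 + v) - 1)" using ln_le_minus_one[of "sqrt (1+v)"] assms by simp
  also have "\<dots> \<le> 2 * sqrt v" using s by simp
  finally show ?thesis .
qed

lemma K2_big:
  fixes \<beta> s0 :: real assumes "0 < \<beta>" "2 < s0"
  shows "\<exists>\<delta>>0. \<delta> \<le> 1/2 \<and> (\<forall>y. 0 < y \<and> y < \<delta> \<longrightarrow> 1 / y \<le> K2 \<beta> y powr s0)"
proof -
  define b where "b = (1 + \<beta>) / 2"
  define g where "g = s0 / 2 - 1"
  define d where "d = s0 * b"
  have g0: "0 < g" and d0: "0 < d" and b0: "0 < b" using assms by (auto simp: g_def d_def b_def)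
  define V where "V = (2 * d / g)^2"
  define \<delta> where "\<delta> = min (1/2) (exp (- V))"
  have "\<delta> > 0" "\<delta> \<le> 1/2" by (auto simp: \<delta>_def)
  moreover have "1 / y \<le> K2 \<beta> y powr s0" if y: "0 < y" "y < \<delta>" for y
  proof -
    define v where "v = - ln y"
    have y1: "y < 1" using y by (simp add: \<delta>_def)
    have "y < exp (- V)" using y by (simp add: \<delta>_def)
    then have "ln y < - V" using y by (metis ln_less_cancel_iff exp_gt_zero ln_exp)
    then have vV: "V < v" by (simp add: v_def)
    have V0: "0 \<le> V" by (simp add: V_def)
    have v0: "0 < v" using vV V0 by simp
    have L: "ln (exp 1 / y) = 1 + v" using y by (simp add: ln_div v_def)
    have K: "K2 \<beta> y = y powr (-1/2) * (1 + v) powr (-(1 + \<beta>)/2)"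
      unfolding K2_def L using y y1 by simp
    have Kp: "0 < K2 \<beta> y" using K y v0 by simp
    have sq: "2 * d / g \<le> sqrt v"
      using vV V0 unfolding V_def by (metis d0 g0 less_imp_le real_le_rsqrt divide_nonneg_nonneg mult_nonneg_nonneg zero_le_numeral)
    have "d * ln (1 + v) \<le> d * (2 * sqrt v)" using ln_le_sqrt[of v] v0 d0 by simp
    also have "\<dots> = (2 * d / g) * sqrt v * g" using g0 by simp
    also have "\<dots> \<le> sqrt v * sqrt v * g" using sq g0 v0 by (intro mult_right_mono) auto
    also have "\<dots> = g * v" using v0 by simp
    finally have key: "d * ln (1 + v) \<le> g * v" .
    have "ln (K2 \<beta> y powr s0) = s0 * (-1/2 * ln y - b * ln (1 + v))"
    proof -
      have "ln (K2 \<beta> y powr s0) = s0 * ln (K2 \<beta> y)" using Kp by (simp add: ln_powr)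
      moreover have "ln (K2 \<beta> y) = ln (y powr (-1/2)) + ln ((1 + v) powr (-(1 + \<beta>)/2))"
        unfolding K using y v0 by (subst ln_mult) auto
      moreover have "ln (y powr (-1/2)) = -1/2 * ln y" using y by (simp add: ln_powr)
      moreover have "ln ((1 + v) powr (-(1 + \<beta>)/2)) = - b * ln (1 + v)" using v0 by (simp add: ln_powr b_def algebra_simps)
      ultimately show ?thesis by simp
    qed
    also have "\<dots> = (g + 1) * v - d * ln (1 + v)" by (simp add: g_def d_def v_def algebra_simps)
    finally have "ln (1 / y) \<le> ln (K2 \<beta> y powr s0)" using key y by (simp add: v_def ln_div algebra_simps)
    then show ?thesis using y Kp by (subst ln_le_cancel_iff[symmetric]) auto
  qed
  ultimately show ?thesis by blast
qed


lemma vnorm_nonneg: "0 \<le> vnorm p f"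
  unfolding vnorm_def by (rule Inf_greatest) auto

lemma vnorm_infinite:
  assumes "\<And>t. 0 < t \<Longrightarrow> (\<integral>\<^sup>+ x. indicator {y. p y < \<infinity>} x * ennreal (\<bar>f x / t\<bar> powr real_of_ereal (p x)) \<partial>lebesgue) = \<infinity>"
  shows "vnorm p f = \<infinity>"
proof -
  have "{t::real. 0 < t \<and> modular p (\<lambda>x. f x / t) \<le> 1} = {}"
    using assms by (auto simp: modular_def)
  then show ?thesis unfolding vnorm_def by (simp only:) (simp add: top_ereal_def[symmetric])
qed

lemma vnorm_indicator:
  assumes "var_exp p"
  shows "vnorm p (indicator {-3/2..13/2 :: real}) \<le> 9"
proof -
  define A where "A = {-3/2..13/2 :: real}"
  have pm[measurable]: "p \<in> borel_measurable lebesgue" using assms by (simp add: var_exp_def)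
  have p1: "1 \<le> p x" for x using assms by (simp add: var_exp_def)
  have I: "(\<integral>\<^sup>+ x. indicator {y. p y < \<infinity>} x * ennreal (\<bar>indicator A x / 9\<bar> powr real_of_ereal (p x)) \<partial>lebesgue)
      \<le> (\<integral>\<^sup>+ x. ennreal (1/9) * indicator A x \<partial>lebesgue)"
  proof (intro nn_integral_mono)
    fix x :: real
    show "indicator {y. p y < \<infinity>} x * ennreal (\<bar>indicator A x / 9\<bar> powr real_of_ereal (p x)) \<le> ennreal (1/9) * indicator A x"
    proof (cases "x \<in> A \<and> p x < \<infinity>")
      case True
      then obtain r where r: "p x = ereal r" using p1[of x] by (cases "p x") auto
      have "1 \<le> r" using p1[of x] r by simp
      then have "(1/9::real) powr r \<le> 1/9" by (intro powr_le_one_le) auto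
      then show ?thesis using True r by (simp add: indicator_def)
    next
      case False
      then show ?thesis by (auto simp: indicator_def)
    qed
  qed
  also have "\<dots> = ennreal (8/9)"
  proof -
    have "(\<integral>\<^sup>+ x. ennreal (1/9) * indicator A x \<partial>lebesgue) = ennreal (1/9) * emeasure lebesgue A"
      by (rule nn_integral_cmult_indicator) (simp add: A_def)
    also have "emeasure lebesgue A = ennreal 8" by (simp add: A_def)
    also have "ennreal (1/9) * ennreal 8 = ennreal (8/9)" using ennreal_mult[of "1/9" 8] by simp
    finally show ?thesis .
  qed
  finally have I0: "(\<integral>\<^sup>+ x. indicator {y. p y < \<infinity>} x * ennreal (\<bar>indicator A x / 9\<bar> powr real_of_ereal (p x)) \<partial>lebesgue) \<le> ennreal (8/9)" .
  have I': "enn2ereal (\<integral>\<^sup>+ x. indicator {y. p y < \<infinity>} x * ennreal (\<bar>indicator A x / 9\<bar> powr real_of_ereal (p x)) \<partial>lebesgue) \<le> ereal (8/9)"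
    using less_eq_ennreal.rep_eq[THEN iffD1, OF I0] by simp
  have E: "esssup lebesgue (\<lambda>x. ereal (\<bar>indicator A x / 9\<bar> * indicator {y. p y = \<infinity>} x)) \<le> ereal (1/9)"
  proof (rule esssup_I)
    show "(\<lambda>x. ereal (\<bar>indicator A x / 9\<bar> * indicator {y. p y = \<infinity>} x)) \<in> borel_measurable lebesgue"
    proof -
      have S: "{y. p y = \<infinity>} \<in> sets lebesgue"
        using measurable_sets[OF pm, of "{\<infinity>}"] by (simp add: vimage_def)
      have "A \<in> sets lebesgue" unfolding A_def by simp
      with S show ?thesis
        by (intro borel_measurable_ereal borel_measurable_times borel_measurable_abs borel_measurable_divide
            borel_measurable_indicator borel_measurable_const)
    qed
    show "AE x in lebesgue. ereal (\<bar>indicator A x / 9\<bar> * indicator {y. p y = \<infinity>} x) \<le> ereal (1/9)"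
      by (auto simp: indicator_def)
  qed
  have "modular p (\<lambda>x. indicator A x / 9) \<le> ereal (8/9) + ereal (1/9)"
    unfolding modular_def by (rule add_mono[OF I' E])
  then have "modular p (\<lambda>x. indicator A x / 9) \<le> 1" by (simp add: one_ereal_def)
  then have "ereal 9 \<in> ereal ` {t::real. 0 < t \<and> modular p (\<lambda>x. indicator A x / t) \<le> 1}" by auto
  then show ?thesis unfolding vnorm_def A_def[symmetric] by (rule Inf_lower[THEN order_trans]) simp
qed


theorem mainTheorem18:
  fixes \<beta> s0 :: real and s :: "real \<Rightarrow> ereal"
  assumes "0 < \<beta>" and "var_exp s" and "s0 > 2" and "\<forall>x\<in>{0..1}. s x = ereal s0"
  shows "\<not> H_s1 s (\<lambda>x y. K1 (x - y) * K2 \<beta> y)"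
proof
  assume H: "H_s1 s (\<lambda>x y. K1 (x - y) * K2 \<beta> y)"
  obtain \<delta> where \<delta>: "\<delta> > 0" "\<delta> \<le> 1/2" "\<forall>y. 0 < y \<and> y < \<delta> \<longrightarrow> 1 / y \<le> K2 \<beta> y powr s0"
    using K2_big[OF assms(1) assms(3)] by blast
  define f where "f = (\<lambda>y. (K1 (5/2 - y) * K2 \<beta> y - K1 (3/2 - y) * K2 \<beta> y) * indicator ({-3/2..13/2} - {1/2..9/2::real}) y)"
  have finf: "vnorm s f = \<infinity>"
  proof (rule vnorm_infinite)
    fix t :: real assume t: "0 < t"
    have "(\<integral>\<^sup>+ y. indicator {0<..<\<delta>} y * ennreal ((1 / t powr s0) / y) \<partial>lebesgue) = \<infinity>"
      by (rule inv_integral_infinite) (use \<delta> t in auto)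
    moreover have "(\<integral>\<^sup>+ y. indicator {0<..<\<delta>} y * ennreal ((1 / t powr s0) / y) \<partial>lebesgue)
        \<le> (\<integral>\<^sup>+ x. indicator {y. s y < \<infinity>} x * ennreal (\<bar>f x / t\<bar> powr real_of_ereal (s x)) \<partial>lebesgue)"
    proof (intro nn_integral_mono)
      fix y :: real
      show "indicator {0<..<\<delta>} y * ennreal ((1 / t powr s0) / y) \<le> indicator {y. s y < \<infinity>} y * ennreal (\<bar>f y / t\<bar> powr real_of_ereal (s y))"
      proof (cases "0 < y \<and> y < \<delta>")
        case True
        have y1: "y < 1/2" using True \<delta> by simp
        have sy: "s y = ereal s0" using assms(4) True y1 by auto
        have fy: "f y = K2 \<beta> y" using True y1 by (auto simp: f_def K1_def indicator_def)
        have "ln y < 0" using True y1 by (intro ln_less_zero) auto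
        moreover have "ln (exp 1 / y) = 1 - ln y" using True by (simp add: ln_div)
        ultimately have L: "0 < ln (exp 1 / y)" by linarith
        have Kp: "0 < K2 \<beta> y" using True y1 L by (simp add: K2_def)
        have "(1 / t powr s0) / y = (1/y) / t powr s0" by simp
        also have "\<dots> \<le> K2 \<beta> y powr s0 / t powr s0" using \<delta> True t by (intro divide_right_mono) auto
        also have "\<dots> = \<bar>f y / t\<bar> powr s0" using Kp t fy by (simp add: powr_divide)
        finally have "(1 / t powr s0) / y \<le> \<bar>f y / t\<bar> powr s0" .
        then show ?thesis using True sy by (simp add: indicator_def ennreal_leI)
      next
        case False then show ?thesis by (auto simp: indicator_def)
      qed
    qed
    ultimately show "(\<integral>\<^sup>+ x. indicator {y. s y < \<infinity>} x * ennreal (\<bar>f x / t\<bar> powr real_of_ereal (s x)) \<partial>lebesgue) = \<infinity>"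
      by (metis infinity_ennreal_def top_unique)
  qed
  from H obtain C where C: "\<forall>c l x z. 0 < l \<longrightarrow> x \<in> ival c (l/2) \<longrightarrow> z \<in> ival c (l/2) \<longrightarrow>
     (\<Sum>m. ereal (2 ^ Suc m * l)
           * vnorm s (\<lambda>y. (K1 (x - y) * K2 \<beta> y - K1 (z - y) * K2 \<beta> y) * indicator (ival c (2 ^ Suc m * l) - ival c (2 ^ m * l)) y)
           / vnorm s (indicator (ival c (2 ^ Suc m * l)))) \<le> ereal C"
    unfolding H_s1_def by blast
  define F where "F m = ereal (2 ^ Suc m * 4)
           * vnorm s (\<lambda>y. (K1 (5/2 - y) * K2 \<beta> y - K1 (3/2 - y) * K2 \<beta> y) * indicator (ival (5/2) (2 ^ Suc m * 4) - ival (5/2) (2 ^ m * 4)) y)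
           / vnorm s (indicator (ival (5/2) (2 ^ Suc m * 4)))" for m :: nat
  have sumC: "(\<Sum>m. F m) \<le> ereal C"
    unfolding F_def by (rule C[rule_format, of 4 "5/2" "5/2" "3/2"]) (simp_all add: ival_def)
  have i8: "ival (5/2) (2 ^ Suc 0 * 4) = {-3/2..13/2}" by (simp add: ival_def)
  have i4: "ival (5/2) (2 ^ 0 * 4) = {1/2..9/2}" by (simp add: ival_def)
  have F0: "F 0 = ereal 8 * vnorm s f / vnorm s (indicator {-3/2..13/2})"
    unfolding F_def i8 i4 f_def by simp
  have D0: "0 \<le> vnorm s (indicator {-3/2..13/2 :: real})" by (rule vnorm_nonneg)
  have D9: "vnorm s (indicator {-3/2..13/2 :: real}) \<le> 9" by (rule vnorm_indicator[OF assms(2)])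
  have Finf: "F 0 = \<infinity>"
  proof -
    obtain r where r: "vnorm s (indicator {-3/2..13/2 :: real}) = ereal r" "0 \<le> r"
      using D0 D9 by (cases "vnorm s (indicator {-3/2..13/2 :: real})") auto
    show ?thesis unfolding F0 finf r(1) using r(2) by (cases "r = 0") (auto simp: divide_ereal_def)
  qed
  have Fnn: "0 \<le> F m" for m
    unfolding F_def by (intro zero_le_divide_ereal vnorm_nonneg ereal_0_le_mult) auto
  have "F 0 \<le> (\<Sum>m. F m)" using suminf_upper[of F 1] Fnn by simp
  then show False using sumC Finf by simp
qed
end
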